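(* Let $\Bbbk$ be an algebraically closed field and $A$ a semisimple $\Bbbk$-algebra, so that $A\cong M_{n_1}(\Bbbk)\times\cdots\times M_{n_r}(\Bbbk)$ by the Artin–Wedderburn theorem. Then $\operatorname{Frobdim}(A)=\sum_{i=1}^r n_i^2$.
   Context: A nearly Frobenius coproduct on a $\Bbbk$-algebra $A$ is a $\Bbbk$-linear map $\Delta:A\to A\otimes_\Bbbk A$ that is an $A$-bimodule morphism, i.e. $\Delta(ab)=(a\otimes 1)\Delta(b)=\Delta(a)(1\otimes b)$ for all $a,b\in A$. The Frobenius space of $A$ is the vector space of all such coproducts, and $\operatorname{Frobdim}A$ is its dimension over $\Bbbk$. *)

theory Defs
  imports Main "HOL-Computational_Algebra.Polynomial" "HOL-Library.Function_Algebras"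
begin

definition alg_closed :: "'k::field itself \<Rightarrow> bool" where
  "alg_closed _ \<longleftrightarrow> (\<forall>p::'k poly. 0 < degree p \<longrightarrow> (\<exists>x. poly p x = 0))"

definition k_algebra :: "('k::field \<Rightarrow> 'a::{ring,monoid_mult} \<Rightarrow> 'a) \<Rightarrow> bool" where
  "k_algebra sc \<longleftrightarrow> vector_space sc \<and>
     (\<forall>c x y. sc c (x * y) = sc c x * y \<and> sc c (x * y) = x * sc c y)"

text \<open>Concrete model of A \<otimes>_k A: the span of the pure tensors a \<otimes> b inside the space of
  k-valued functions on k-bilinear forms B : A \<times> A \<rightarrow> k, where (a \<otimes> b)(B) = B a b.
  (The canonical map A \<otimes> A \<rightarrow> Bil(A \<times> A, k)^* is injective, so this span is the tensor square.)\<close>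

definition bilin :: "('k::field \<Rightarrow> 'a::ab_group_add \<Rightarrow> 'a) \<Rightarrow> ('a \<Rightarrow> 'a \<Rightarrow> 'k) \<Rightarrow> bool" where
  "bilin sc B \<longleftrightarrow> (\<forall>y. Vector_Spaces.linear sc (*) (\<lambda>x. B x y)) \<and>
                  (\<forall>x. Vector_Spaces.linear sc (*) (B x))"

type_synonym ('a, 'k) tens = "('a \<Rightarrow> 'a \<Rightarrow> 'k) \<Rightarrow> 'k"

definition tscale :: "'k::field \<Rightarrow> ('a, 'k) tens \<Rightarrow> ('a, 'k) tens" where
  "tscale c t = (\<lambda>B. c * t B)"

definition tens :: "('k::field \<Rightarrow> 'a::ab_group_add \<Rightarrow> 'a) \<Rightarrow> 'a \<Rightarrow> 'a \<Rightarrow> ('a, 'k) tens" where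
  "tens sc a b = (\<lambda>B. if bilin sc B then B a b else 0)"

definition tensor_square :: "('k::field \<Rightarrow> 'a::ab_group_add \<Rightarrow> 'a) \<Rightarrow> ('a, 'k) tens set" where
  "tensor_square sc = module.span tscale (range (\<lambda>(a, b). tens sc a b))"

text \<open>Left action (a \<otimes> 1) \<cdot> t and right action t \<cdot> (1 \<otimes> b) of A on A \<otimes> A.\<close>

definition lact :: "('k::field \<Rightarrow> 'a::{ring,monoid_mult} \<Rightarrow> 'a) \<Rightarrow> 'a \<Rightarrow> ('a, 'k) tens \<Rightarrow> ('a, 'k) tens" where
  "lact sc a t = (\<lambda>B. if bilin sc B then t (\<lambda>x y. B (a * x) y) else 0)"

definition ract :: "('k::field \<Rightarrow> 'a::{ring,monoid_mult} \<Rightarrow> 'a) \<Rightarrow> 'a \<Rightarrow> ('a, 'k) tens \<Rightarrow> ('a, 'k) tens" where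
  "ract sc b t = (\<lambda>B. if bilin sc B then t (\<lambda>x y. B x (y * b)) else 0)"

definition nearly_frobenius_coproduct ::
  "('k::field \<Rightarrow> 'a::{ring,monoid_mult} \<Rightarrow> 'a) \<Rightarrow> ('a \<Rightarrow> ('a, 'k) tens) \<Rightarrow> bool" where
  "nearly_frobenius_coproduct sc \<Delta> \<longleftrightarrow>
     Vector_Spaces.linear sc tscale \<Delta> \<and>
     (\<forall>x. \<Delta> x \<in> tensor_square sc) \<and>
     (\<forall>a b. \<Delta> (a * b) = lact sc a (\<Delta> b) \<and> \<Delta> (a * b) = ract sc b (\<Delta> a))"

definition frobenius_space ::
  "('k::field \<Rightarrow> 'a::{ring,monoid_mult} \<Rightarrow> 'a) \<Rightarrow> ('a \<Rightarrow> ('a, 'k) tens) set" where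
  "frobenius_space sc = {\<Delta>. nearly_frobenius_coproduct sc \<Delta>}"

definition mscale :: "'k::field \<Rightarrow> ('a \<Rightarrow> ('a, 'k) tens) \<Rightarrow> ('a \<Rightarrow> ('a, 'k) tens)" where
  "mscale c \<Delta> = (\<lambda>x. tscale c (\<Delta> x))"

definition Frobdim :: "('k::field \<Rightarrow> 'a::{ring,monoid_mult} \<Rightarrow> 'a) \<Rightarrow> nat" where
  "Frobdim sc = vector_space.dim mscale (frobenius_space sc)"

text \<open>An element is X with X i j l the (j,l) entry of the i-th factor (i < r, j,l < n_i),
  all other values being 0.\<close>

definition pm_carrier :: "nat list \<Rightarrow> (nat \<Rightarrow> nat \<Rightarrow> nat \<Rightarrow> 'k::field) set" where
  "pm_carrier ns = {X. \<forall>i j l. X i j l \<noteq> 0 \<longrightarrow> i < length ns \<and> j < ns ! i \<and> l < ns ! i}"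

definition pm_mul :: "nat list \<Rightarrow> (nat \<Rightarrow> nat \<Rightarrow> nat \<Rightarrow> 'k::field) \<Rightarrow> (nat \<Rightarrow> nat \<Rightarrow> nat \<Rightarrow> 'k) \<Rightarrow> (nat \<Rightarrow> nat \<Rightarrow> nat \<Rightarrow> 'k)" where
  "pm_mul ns X Y = (\<lambda>i j l. if i < length ns \<and> j < ns ! i \<and> l < ns ! i
                             then (\<Sum>m<ns ! i. X i j m * Y i m l) else 0)"

definition pm_one :: "nat list \<Rightarrow> (nat \<Rightarrow> nat \<Rightarrow> nat \<Rightarrow> 'k::field)" where
  "pm_one ns = (\<lambda>i j l. if i < length ns \<and> j < ns ! i \<and> j = l then 1 else 0)"

definition iso_prod_matrix_algebras ::
  "('k::field \<Rightarrow> 'a::{ring,monoid_mult} \<Rightarrow> 'a) \<Rightarrow> nat list \<Rightarrow> bool" where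
  "iso_prod_matrix_algebras sc ns \<longleftrightarrow>
     (\<exists>\<phi> :: 'a \<Rightarrow> nat \<Rightarrow> nat \<Rightarrow> nat \<Rightarrow> 'k.
        bij_betw \<phi> UNIV (pm_carrier ns) \<and>
        (\<forall>x y. \<phi> (x + y) = (\<lambda>i j l. \<phi> x i j l + \<phi> y i j l)) \<and>
        (\<forall>c x. \<phi> (sc c x) = (\<lambda>i j l. c * \<phi> x i j l)) \<and>
        (\<forall>x y. \<phi> (x * y) = pm_mul ns (\<phi> x) (\<phi> y)) \<and>
        \<phi> 1 = pm_one ns)"

end

theory Submission
  imports Defs
begin

lemma sum_fun_app: "(\<Sum>x\<in>A. f x) y = (\<Sum>x\<in>A. f x y)"
  by (induction A rule: infinite_finite_induct) auto

lemma sum2_delta: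
  assumes "a \<in> A" "b \<in> B" "finite A" "finite B"
  shows "(\<Sum>j\<in>A. \<Sum>m\<in>B. if j = a \<and> m = b then c j m else 0) = c a b"
proof -
  have "(\<Sum>m\<in>B. if j = a \<and> m = b then c j m else 0) = (if j = a then c a b else 0)" for j
    using assms by (cases "j = a") auto
  then show ?thesis using assms by simp
qed

lemma sum3_swap:
  "(\<Sum>j\<in>A. \<Sum>m\<in>C. \<Sum>j'\<in>A'. f j m j') = (\<Sum>j'\<in>A'. \<Sum>m\<in>C. \<Sum>j\<in>A. f j m j')"
proof -
  have "(\<Sum>j\<in>A. \<Sum>m\<in>C. \<Sum>j'\<in>A'. f j m j') = (\<Sum>j\<in>A. \<Sum>j'\<in>A'. \<Sum>m\<in>C. f j m j')"
    by (rule sum.cong[OF refl]) (rule sum.swap)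
  also have "\<dots> = (\<Sum>j'\<in>A'. \<Sum>j\<in>A. \<Sum>m\<in>C. f j m j')" by (rule sum.swap)
  also have "\<dots> = (\<Sum>j'\<in>A'. \<Sum>m\<in>C. \<Sum>j\<in>A. f j m j')"
    by (rule sum.cong[OF refl]) (rule sum.swap)
  finally show ?thesis .
qed

lemma vs_field: "vector_space ((*) :: 'k::field \<Rightarrow> 'k \<Rightarrow> 'k)"
  by unfold_locales (auto simp: algebra_simps)

lemma module_tscale: "module (tscale :: 'k::field \<Rightarrow> ('a, 'k) tens \<Rightarrow> ('a, 'k) tens)"
  by unfold_locales (auto simp: tscale_def algebra_simps fun_eq_iff)

lemma vs_tscale: "vector_space (tscale :: 'k::field \<Rightarrow> ('a, 'k) tens \<Rightarrow> ('a, 'k) tens)"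
  using module_tscale module_iff_vector_space by blast

lemma vs_mscale: "vector_space (mscale :: 'k::field \<Rightarrow> ('a \<Rightarrow> ('a, 'k) tens) \<Rightarrow> _)"
  by unfold_locales (auto simp: mscale_def tscale_def algebra_simps fun_eq_iff)

lemma tscale_app[simp]: "tscale c t B = c * t B"
  by (simp add: tscale_def)

lemma mscale_app[simp]: "mscale c D x = tscale c (D x)"
  by (simp add: mscale_def)

lemma bilin_linear1: "bilin sc B \<Longrightarrow> Vector_Spaces.linear sc (*) (\<lambda>x. B x y)"
  by (simp add: bilin_def)
lemma bilin_linear2: "bilin sc B \<Longrightarrow> Vector_Spaces.linear sc (*) (B x)"
  by (simp add: bilin_def)

lemma bilin_sum1:
  assumes "bilin sc B"
  shows "B (\<Sum>k\<in>K. sc (c k) (u k)) y = (\<Sum>k\<in>K. c k * B (u k) y)"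
proof -
  interpret l: Vector_Spaces.linear sc "(*)" "\<lambda>x. B x y" using bilin_linear1[OF assms] .
  show ?thesis by (simp add: l.sum l.scale)
qed

lemma bilin_sum2:
  assumes "bilin sc B"
  shows "B x (\<Sum>k\<in>K. sc (c k) (u k)) = (\<Sum>k\<in>K. c k * B x (u k))"
proof -
  interpret l: Vector_Spaces.linear sc "(*)" "B x" using bilin_linear2[OF assms] .
  show ?thesis by (simp add: l.sum l.scale)
qed

lemma bilin_zero: "vector_space sc \<Longrightarrow> bilin sc (\<lambda>x y. 0)"
  unfolding bilin_def using vs_field by (simp add: Vector_Spaces.linear_iff)

lemma tens_nonbilin: "\<not> bilin sc B \<Longrightarrow> tens sc a b B = 0"
  by (simp add: tens_def)


locale frob_setup =
  fixes sc :: "'k::field \<Rightarrow> 'a::{ring,monoid_mult} \<Rightarrow> 'a" and ns :: "nat list"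
    and \<phi> :: "'a \<Rightarrow> nat \<Rightarrow> nat \<Rightarrow> nat \<Rightarrow> 'k"
  assumes kalg: "k_algebra sc" and pos: "\<forall>n\<in>set ns. 0 < n"
    and bij: "bij_betw \<phi> UNIV (pm_carrier ns)"
    and padd: "\<And>x y. \<phi> (x + y) = (\<lambda>i j l. \<phi> x i j l + \<phi> y i j l)"
    and pscale: "\<And>c x. \<phi> (sc c x) = (\<lambda>i j l. c * \<phi> x i j l)"
    and pmul: "\<And>x y. \<phi> (x * y) = pm_mul ns (\<phi> x) (\<phi> y)"
begin

definition Idx :: "(nat \<times> nat \<times> nat) set" where
  "Idx = {(i,j,l). i < length ns \<and> j < ns!i \<and> l < ns!i}"
definition co :: "'a \<Rightarrow> nat \<times> nat \<times> nat \<Rightarrow> 'k" where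
  "co x \<alpha> = (case \<alpha> of (i,j,l) \<Rightarrow> \<phi> x i j l)"
definition unit :: "nat \<times> nat \<times> nat \<Rightarrow> nat \<Rightarrow> nat \<Rightarrow> nat \<Rightarrow> 'k" where
  "unit \<alpha> = (\<lambda>i j l. if (i,j,l) = \<alpha> then 1 else 0)"
definition E :: "nat \<times> nat \<times> nat \<Rightarrow> 'a" where
  "E \<alpha> = inv_into UNIV \<phi> (unit \<alpha>)"
definition Bf :: "nat \<times> nat \<times> nat \<Rightarrow> nat \<times> nat \<times> nat \<Rightarrow> 'a \<Rightarrow> 'a \<Rightarrow> 'k" where
  "Bf \<alpha> \<beta> = (\<lambda>x y. co x \<alpha> * co y \<beta>)"

lemma vs: "vector_space sc"
  using kalg by (simp add: k_algebra_def)

lemma Idx_Sigma: "Idx = Sigma {..<length ns} (\<lambda>i. {..<ns!i} \<times> {..<ns!i})"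
  by (auto simp: Idx_def)

lemma finite_Idx[simp]: "finite Idx"
  unfolding Idx_Sigma by auto

lemma card_Idx: "card Idx = (\<Sum>i<length ns. (ns ! i)^2)"
  unfolding Idx_Sigma by (simp add: power2_eq_square)

lemma Idx_iff[simp]: "(i,j,l) \<in> Idx \<longleftrightarrow> i < length ns \<and> j < ns!i \<and> l < ns!i"
  by (simp add: Idx_def)

lemma nz: "i < length ns \<Longrightarrow> 0 < ns ! i"
  using pos by auto

lemma co_add[simp]: "co (x + y) \<alpha> = co x \<alpha> + co y \<alpha>"
  by (cases \<alpha>) (simp add: co_def padd)

lemma co_scale[simp]: "co (sc c x) \<alpha> = c * co x \<alpha>"
  by (cases \<alpha>) (simp add: co_def pscale)

lemma co_zero[simp]: "co 0 \<alpha> = 0"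
  using co_add[of 0 0 \<alpha>] by (metis add_0_left add_cancel_right_right)

lemma co_sum: "co (\<Sum>k\<in>K. f k) \<alpha> = (\<Sum>k\<in>K. co (f k) \<alpha>)"
  by (induction K rule: infinite_finite_induct) auto

lemma co_out: "\<alpha> \<notin> Idx \<Longrightarrow> co x \<alpha> = 0"
proof -
  assume a: "\<alpha> \<notin> Idx"
  obtain i j l where al: "\<alpha> = (i,j,l)" by (cases \<alpha>) auto
  have "\<phi> x \<in> pm_carrier ns" using bij by (auto simp: bij_betw_def)
  then show ?thesis using a al by (auto simp: pm_carrier_def co_def)
qed

lemma phi_eqI:
  assumes "\<And>\<alpha>. \<alpha> \<in> Idx \<Longrightarrow> co x \<alpha> = co y \<alpha>"
  shows "x = y"
proof -
  have "co x \<alpha> = co y \<alpha>" for \<alpha>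
    using assms co_out by (cases "\<alpha> \<in> Idx") auto
  then have "\<phi> x = \<phi> y"
    by (auto simp: fun_eq_iff co_def split: prod.splits)
  then show ?thesis using bij by (auto simp: bij_betw_def inj_on_def)
qed

lemma co_E: assumes "\<alpha> \<in> Idx" shows "co (E \<alpha>) \<beta> = (if \<beta> = \<alpha> then 1 else 0)"
proof -
  have "unit \<alpha> \<in> pm_carrier ns" using assms
    by (cases \<alpha>) (auto simp: pm_carrier_def unit_def)
  then have "\<phi> (E \<alpha>) = unit \<alpha>" unfolding E_def
    using bij by (simp add: bij_betw_inv_into_right)
  then show ?thesis by (cases \<beta>) (auto simp: co_def unit_def)
qed

lemma co_mul: "co (x * y) (i,j,l) =
   (if (i,j,l) \<in> Idx then (\<Sum>m<ns!i. co x (i,j,m) * co y (i,m,l)) else 0)"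
  by (simp add: co_def pmul pm_mul_def)

lemma expand: "x = (\<Sum>\<alpha>\<in>Idx. sc (co x \<alpha>) (E \<alpha>))"
proof (rule phi_eqI)
  fix \<beta> assume b: "\<beta> \<in> Idx"
  have "co (\<Sum>\<alpha>\<in>Idx. sc (co x \<alpha>) (E \<alpha>)) \<beta> = (\<Sum>\<alpha>\<in>Idx. co x \<alpha> * co (E \<alpha>) \<beta>)"
    by (simp add: co_sum)
  also have "\<dots> = (\<Sum>\<alpha>\<in>Idx. if \<beta> = \<alpha> then co x \<beta> else 0)"
    by (rule sum.cong) (auto simp: co_E)
  also have "\<dots> = co x \<beta>" using b by simp
  finally show "co x \<beta> = co (\<Sum>\<alpha>\<in>Idx. sc (co x \<alpha>) (E \<alpha>)) \<beta>" by simp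
qed

lemma sc_mul_left: "sc c (a * x) = a * sc c x"
  using kalg unfolding k_algebra_def by metis
lemma sc_mul_right: "sc c (x * b) = sc c x * b"
  using kalg unfolding k_algebra_def by metis

lemma bilin_Bf: "bilin sc (Bf \<alpha> \<beta>)"
  unfolding bilin_def Bf_def using vs vs_field
  by (simp add: Vector_Spaces.linear_iff algebra_simps)

lemma bilin_lmul: assumes "bilin sc B" shows "bilin sc (\<lambda>x y. B (a * x) y)"
proof -
  have l1: "Vector_Spaces.linear sc (*) (\<lambda>x. B x y)" for y using assms by (simp add: bilin_def)
  have l2: "Vector_Spaces.linear sc (*) (B x)" for x using assms by (simp add: bilin_def)
  have "Vector_Spaces.linear sc (*) (\<lambda>x. B (a * x) y)" for y
  proof -
    interpret l: Vector_Spaces.linear sc "(*)" "\<lambda>x. B x y" by (rule l1)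
    show ?thesis using vs vs_field
      by (simp add: Vector_Spaces.linear_iff distrib_left l.add l.scale flip: sc_mul_left)
  qed
  then show ?thesis using l2 by (simp add: bilin_def)
qed

lemma bilin_rmul: assumes "bilin sc B" shows "bilin sc (\<lambda>x y. B x (y * b))"
proof -
  have l1: "Vector_Spaces.linear sc (*) (\<lambda>x. B x y)" for y using assms by (simp add: bilin_def)
  have l2: "Vector_Spaces.linear sc (*) (B x)" for x using assms by (simp add: bilin_def)
  have "Vector_Spaces.linear sc (*) (\<lambda>y. B x (y * b))" for x
  proof -
    interpret l: Vector_Spaces.linear sc "(*)" "B x" by (rule l2)
    show ?thesis using vs vs_field
      by (simp add: Vector_Spaces.linear_iff distrib_right l.add l.scale flip: sc_mul_right)
  qed
  then show ?thesis using l1 by (simp add: bilin_def)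
qed

lemma bilin_expand:
  assumes "bilin sc B"
  shows "B x y = (\<Sum>\<alpha>\<in>Idx. \<Sum>\<beta>\<in>Idx. co x \<alpha> * co y \<beta> * B (E \<alpha>) (E \<beta>))"
proof -
  have "B x y = B (\<Sum>\<alpha>\<in>Idx. sc (co x \<alpha>) (E \<alpha>)) (\<Sum>\<beta>\<in>Idx. sc (co y \<beta>) (E \<beta>))"
    by (rule arg_cong2[where f=B]; rule expand)
  also have "\<dots> = (\<Sum>\<alpha>\<in>Idx. co x \<alpha> * B (E \<alpha>) (\<Sum>\<beta>\<in>Idx. sc (co y \<beta>) (E \<beta>)))"
    by (rule bilin_sum1[OF assms])
  also have "\<dots> = (\<Sum>\<alpha>\<in>Idx. \<Sum>\<beta>\<in>Idx. co x \<alpha> * co y \<beta> * B (E \<alpha>) (E \<beta>))"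
    by (simp add: bilin_sum2[OF assms] sum_distrib_left mult.assoc)
  finally show ?thesis .
qed


lemma tens_Bf[simp]: "tens sc a b (Bf \<alpha> \<beta>) = co a \<alpha> * co b \<beta>"
proof -
  have "bilin sc (Bf \<alpha> \<beta>)" by (rule bilin_Bf)
  then show ?thesis by (simp add: tens_def) (simp add: Bf_def)
qed

abbreviation T where "T \<equiv> tensor_square sc"

lemma T_expand:
  assumes "t \<in> T"
  shows "t B = (\<Sum>\<alpha>\<in>Idx. \<Sum>\<beta>\<in>Idx. t (Bf \<alpha> \<beta>) * tens sc (E \<alpha>) (E \<beta>) B)"
proof -
  interpret m: module tscale by (rule module_tscale)
  have "\<forall>B. t B = (\<Sum>\<alpha>\<in>Idx. \<Sum>\<beta>\<in>Idx. t (Bf \<alpha> \<beta>) * tens sc (E \<alpha>) (E \<beta>) B)"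
    using assms unfolding tensor_square_def
  proof (induction rule: m.span_induct_alt)
    case base
    then show ?case by simp
  next
    case (step c x y)
    then obtain a b where x: "x = tens sc a b" by auto
    have hx: "x B = (\<Sum>\<alpha>\<in>Idx. \<Sum>\<beta>\<in>Idx. x (Bf \<alpha> \<beta>) * tens sc (E \<alpha>) (E \<beta>) B)" for B
    proof (cases "bilin sc B")
      case True
      have "x B = B a b" using True x by (simp add: tens_def)
      then show ?thesis unfolding x tens_Bf
        by (simp add: tens_def True bilin_expand[OF True, of a b])
    qed (simp add: x tens_def)
    show ?case
    proof
      fix B
      have "(tscale c x + y) B = c * x B + y B" by simp
      also have "\<dots> = c * (\<Sum>\<alpha>\<in>Idx. \<Sum>\<beta>\<in>Idx. x (Bf \<alpha> \<beta>) * tens sc (E \<alpha>) (E \<beta>) B)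
           + (\<Sum>\<alpha>\<in>Idx. \<Sum>\<beta>\<in>Idx. y (Bf \<alpha> \<beta>) * tens sc (E \<alpha>) (E \<beta>) B)"
        by (simp only: hx[of B] step.IH[rule_format, of B])
      also have "\<dots> = (\<Sum>\<alpha>\<in>Idx. \<Sum>\<beta>\<in>Idx. (tscale c x + y) (Bf \<alpha> \<beta>) * tens sc (E \<alpha>) (E \<beta>) B)"
        by (simp add: sum_distrib_left ring_distribs sum.distrib mult.assoc)
      finally show "(tscale c x + y) B = (\<Sum>\<alpha>\<in>Idx. \<Sum>\<beta>\<in>Idx. (tscale c x + y) (Bf \<alpha> \<beta>) * tens sc (E \<alpha>) (E \<beta>) B)" .
    qed
  qed
  then show ?thesis by blast
qed

lemma T_nonbilin: "t \<in> T \<Longrightarrow> \<not> bilin sc B \<Longrightarrow> t B = 0"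
  by (subst T_expand) (auto simp: tens_def)

lemma T_zero_form: "t \<in> T \<Longrightarrow> t (\<lambda>x y. 0) = 0"
  by (subst T_expand) (auto simp: tens_def)

lemma T_eqI:
  assumes "t \<in> T" "t' \<in> T" "\<And>\<alpha> \<beta>. \<alpha> \<in> Idx \<Longrightarrow> \<beta> \<in> Idx \<Longrightarrow> t (Bf \<alpha> \<beta>) = t' (Bf \<alpha> \<beta>)"
  shows "t = t'"
proof
  fix B show "t B = t' B"
    using T_expand[OF assms(1), of B] T_expand[OF assms(2), of B] assms(3)
    by (simp cong: sum.cong)
qed

lemma tens_T: "tens sc a b \<in> T"
proof -
  interpret m: module tscale by (rule module_tscale)
  show ?thesis unfolding tensor_square_def by (rule m.span_base) auto
qed

lemma T_sum: "(\<And>k. k \<in> K \<Longrightarrow> f k \<in> T) \<Longrightarrow> (\<Sum>k\<in>K. f k) \<in> T"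
proof -
  interpret m: module tscale by (rule module_tscale)
  show "(\<And>k. k \<in> K \<Longrightarrow> f k \<in> T) \<Longrightarrow> (\<Sum>k\<in>K. f k) \<in> T"
    unfolding tensor_square_def by (rule m.span_sum)
qed

lemma T_scale: "t \<in> T \<Longrightarrow> tscale c t \<in> T"
proof -
  interpret m: module tscale by (rule module_tscale)
  show "t \<in> T \<Longrightarrow> tscale c t \<in> T"
    unfolding tensor_square_def by (rule m.span_scale)
qed

definition Dl :: "nat \<Rightarrow> nat \<Rightarrow> nat \<Rightarrow> 'a \<Rightarrow> ('a, 'k) tens" where
  "Dl i p q x = (\<Sum>j<ns!i. \<Sum>m<ns!i. tscale (co x (i,j,m)) (tens sc (E (i,j,p)) (E (i,q,m))))"

lemma D_app: "Dl i p q x B = (\<Sum>j<ns!i. \<Sum>m<ns!i. co x (i,j,m) * tens sc (E (i,j,p)) (E (i,q,m)) B)"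
  by (simp add: Dl_def sum_fun_app)

lemma D_T: "Dl i p q x \<in> T"
  unfolding Dl_def by (intro T_sum T_scale tens_T)

lemma D_Bf:
  assumes "(i,p,q) \<in> Idx" "(a1,a2,a3) \<in> Idx" "(b1,b2,b3) \<in> Idx"
  shows "Dl i p q x (Bf (a1,a2,a3) (b1,b2,b3)) =
    (if a1 = i \<and> a3 = p \<and> b1 = i \<and> b2 = q then co x (i,a2,b3) else 0)"
proof -
  have "Dl i p q x (Bf (a1,a2,a3) (b1,b2,b3)) =
     (\<Sum>j<ns!i. \<Sum>m<ns!i. if j = a2 \<and> m = b3 \<and> a1 = i \<and> a3 = p \<and> b1 = i \<and> b2 = q then co x (i,j,m) else 0)"
    unfolding D_app using assms
    by (intro sum.cong refl) (auto simp: co_E)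
  also have "\<dots> = (if a1 = i \<and> a3 = p \<and> b1 = i \<and> b2 = q then co x (i,a2,b3) else 0)"
    using assms by (auto simp: sum2_delta)
  finally show ?thesis .
qed

lemma D_linear: "Vector_Spaces.linear sc tscale (Dl i p q)"
  unfolding Vector_Spaces.linear_iff using vs vs_tscale
  by (auto simp: fun_eq_iff D_app ring_distribs sum.distrib sum_distrib_left mult.assoc)

lemma a_mul_E:
  assumes "(i,j,p) \<in> Idx"
  shows "a * E (i,j,p) = (\<Sum>j'<ns!i. sc (co a (i,j',j)) (E (i,j',p)))"
proof (rule phi_eqI)
  fix \<beta> assume b: "\<beta> \<in> Idx"
  obtain b1 b2 b3 where bb: "\<beta> = (b1,b2,b3)" by (cases \<beta>) auto
  have "co (a * E (i,j,p)) \<beta> = (\<Sum>m<ns!b1. co a (b1,b2,m) * co (E (i,j,p)) (b1,m,b3))"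
    using b bb by (simp add: co_mul)
  also have "\<dots> = (\<Sum>m<ns!b1. if m = j \<and> b1 = i \<and> b3 = p then co a (i,b2,j) else 0)"
    using assms by (intro sum.cong refl) (auto simp: co_E)
  also have "\<dots> = (if b1 = i \<and> b3 = p then co a (i,b2,j) else 0)"
    using assms by (auto simp: sum.delta' if_distrib cong: if_cong)
  also have "\<dots> = (\<Sum>j'<ns!i. co a (i,j',j) * co (E (i,j',p)) \<beta>)"
  proof -
    have "(\<Sum>j'<ns!i. co a (i,j',j) * co (E (i,j',p)) \<beta>) =
        (\<Sum>j'<ns!i. if j' = b2 \<and> b1 = i \<and> b3 = p then co a (i,b2,j) else 0)"
      using assms bb by (intro sum.cong refl) (auto simp: co_E)
    also have "\<dots> = (if b1 = i \<and> b3 = p then co a (i,b2,j) else 0)"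
      using assms b bb by (auto simp: sum.delta' if_distrib cong: if_cong)
    finally show ?thesis by simp
  qed
  finally show "co (a * E (i,j,p)) \<beta> = co (\<Sum>j'<ns!i. sc (co a (i,j',j)) (E (i,j',p))) \<beta>"
    by (simp add: co_sum)
qed

lemma E_mul_b:
  assumes "(i,q,m) \<in> Idx"
  shows "E (i,q,m) * b = (\<Sum>m'<ns!i. sc (co b (i,m,m')) (E (i,q,m')))"
proof (rule phi_eqI)
  fix \<beta> assume b: "\<beta> \<in> Idx"
  obtain b1 b2 b3 where bb: "\<beta> = (b1,b2,b3)" by (cases \<beta>) auto
  have "co (E (i,q,m) * b) \<beta> = (\<Sum>m'<ns!b1. co (E (i,q,m)) (b1,b2,m') * co b (b1,m',b3))"
    using b bb by (simp add: co_mul)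
  also have "\<dots> = (\<Sum>m'<ns!b1. if m' = m \<and> b1 = i \<and> b2 = q then co b (i,m,b3) else 0)"
    using assms by (intro sum.cong refl) (auto simp: co_E)
  also have "\<dots> = (if b1 = i \<and> b2 = q then co b (i,m,b3) else 0)"
    using assms by (auto simp: sum.delta' if_distrib cong: if_cong)
  also have "\<dots> = (\<Sum>m'<ns!i. co b (i,m,m') * co (E (i,q,m')) \<beta>)"
  proof -
    have "(\<Sum>m'<ns!i. co b (i,m,m') * co (E (i,q,m')) \<beta>) =
        (\<Sum>m'<ns!i. if m' = b3 \<and> b1 = i \<and> b2 = q then co b (i,m,b3) else 0)"
      using assms bb by (intro sum.cong refl) (auto simp: co_E)
    also have "\<dots> = (if b1 = i \<and> b2 = q then co b (i,m,b3) else 0)"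
      using assms b bb by (auto simp: sum.delta' if_distrib cong: if_cong)
    finally show ?thesis by simp
  qed
  finally show "co (E (i,q,m) * b) \<beta> = co (\<Sum>m'<ns!i. sc (co b (i,m,m')) (E (i,q,m'))) \<beta>"
    by (simp add: co_sum)
qed

lemma D_lact:
  assumes g: "(i,p,q) \<in> Idx"
  shows "Dl i p q (a * b) = lact sc a (Dl i p q b)"
proof
  fix B
  show "Dl i p q (a * b) B = lact sc a (Dl i p q b) B"
  proof (cases "bilin sc B")
    case True
    let ?n = "ns!i"
    have "lact sc a (Dl i p q b) B = Dl i p q b (\<lambda>x y. B (a * x) y)" by (simp add: lact_def True)
    also have "\<dots> = (\<Sum>j<?n. \<Sum>m<?n. co b (i,j,m) * B (a * E (i,j,p)) (E (i,q,m)))"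
      by (simp add: D_app tens_def bilin_lmul[OF True])
    also have "\<dots> = (\<Sum>j<?n. \<Sum>m<?n. co b (i,j,m) * (\<Sum>j'<?n. co a (i,j',j) * B (E (i,j',p)) (E (i,q,m))))"
      using g by (intro sum.cong refl) (simp add: a_mul_E bilin_sum1[OF True])
    also have "\<dots> = (\<Sum>j<?n. \<Sum>m<?n. \<Sum>j'<?n. co a (i,j',j) * co b (i,j,m) * B (E (i,j',p)) (E (i,q,m)))"
      by (simp add: sum_distrib_left mult.assoc mult.left_commute)
    also have "\<dots> = (\<Sum>j'<?n. \<Sum>m<?n. \<Sum>j<?n. co a (i,j',j) * co b (i,j,m) * B (E (i,j',p)) (E (i,q,m)))"
      by (rule sum3_swap)
    also have "\<dots> = (\<Sum>j'<?n. \<Sum>m<?n. co (a * b) (i,j',m) * B (E (i,j',p)) (E (i,q,m)))"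
      using g by (intro sum.cong refl) (simp add: co_mul sum_distrib_right)
    also have "\<dots> = Dl i p q (a * b) B"
      by (simp add: D_app tens_def True)
    finally show ?thesis by simp
  qed (simp add: lact_def D_app tens_def)
qed

lemma D_ract:
  assumes g: "(i,p,q) \<in> Idx"
  shows "Dl i p q (a * b) = ract sc b (Dl i p q a)"
proof
  fix B
  show "Dl i p q (a * b) B = ract sc b (Dl i p q a) B"
  proof (cases "bilin sc B")
    case True
    let ?n = "ns!i"
    have "ract sc b (Dl i p q a) B = Dl i p q a (\<lambda>x y. B x (y * b))" by (simp add: ract_def True)
    also have "\<dots> = (\<Sum>j<?n. \<Sum>m<?n. co a (i,j,m) * B (E (i,j,p)) (E (i,q,m) * b))"
      by (simp add: D_app tens_def bilin_rmul[OF True])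
    also have "\<dots> = (\<Sum>j<?n. \<Sum>m<?n. co a (i,j,m) * (\<Sum>m'<?n. co b (i,m,m') * B (E (i,j,p)) (E (i,q,m'))))"
      using g by (intro sum.cong refl) (simp add: E_mul_b bilin_sum2[OF True])
    also have "\<dots> = (\<Sum>j<?n. \<Sum>m<?n. \<Sum>m'<?n. co a (i,j,m) * co b (i,m,m') * B (E (i,j,p)) (E (i,q,m')))"
      by (simp add: sum_distrib_left mult.assoc)
    also have "\<dots> = (\<Sum>j<?n. \<Sum>m'<?n. \<Sum>m<?n. co a (i,j,m) * co b (i,m,m') * B (E (i,j,p)) (E (i,q,m')))"
      by (rule sum.cong[OF refl]) (rule sum.swap)
    also have "\<dots> = (\<Sum>j<?n. \<Sum>m'<?n. co (a * b) (i,j,m') * B (E (i,j,p)) (E (i,q,m')))"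
      using g by (intro sum.cong refl) (simp add: co_mul sum_distrib_right)
    also have "\<dots> = Dl i p q (a * b) B"
      by (simp add: D_app tens_def True)
    finally show ?thesis by simp
  qed (simp add: ract_def D_app tens_def)
qed

lemma D_FS: "(i,p,q) \<in> Idx \<Longrightarrow> Dl i p q \<in> frobenius_space sc"
  unfolding frobenius_space_def nearly_frobenius_coproduct_def
  using D_linear D_T D_lact D_ract by blast

lemma lact_E_Bf:
  assumes t: "t \<in> T" and r: "(s,u,v) \<in> Idx" and a: "(a1,a2,a3) \<in> Idx"
  shows "lact sc (E (s,u,v)) t (Bf (a1,a2,a3) \<beta>) = (if a1 = s \<and> a2 = u then t (Bf (s,v,a3) \<beta>) else 0)"
proof -
  have fe: "(\<lambda>x y. Bf (a1,a2,a3) \<beta> (E (s,u,v) * x) y) = (if a1 = s \<and> a2 = u then Bf (s,v,a3) \<beta> else (\<lambda>x y. 0))"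
  proof (intro ext)
    fix x y
    have "co (E (s,u,v) * x) (a1,a2,a3) = (\<Sum>m<ns!a1. co (E (s,u,v)) (a1,a2,m) * co x (a1,m,a3))"
      using a by (simp add: co_mul)
    also have "\<dots> = (\<Sum>m<ns!a1. if m = v \<and> a1 = s \<and> a2 = u then co x (s,v,a3) else 0)"
      using r by (intro sum.cong refl) (auto simp: co_E)
    also have "\<dots> = (if a1 = s \<and> a2 = u then co x (s,v,a3) else 0)"
      using r by (auto simp: sum.delta' if_distrib cong: if_cong)
    finally show "Bf (a1,a2,a3) \<beta> (E (s,u,v) * x) y = (if a1 = s \<and> a2 = u then Bf (s,v,a3) \<beta> else (\<lambda>x y. 0)) x y"
      by (simp add: Bf_def)
  qed
  have "lact sc (E (s,u,v)) t (Bf (a1,a2,a3) \<beta>) = t (\<lambda>x y. Bf (a1,a2,a3) \<beta> (E (s,u,v) * x) y)"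
    by (simp add: lact_def bilin_Bf)
  also have "\<dots> = t (if a1 = s \<and> a2 = u then Bf (s,v,a3) \<beta> else (\<lambda>x y. 0))"
    by (rule arg_cong[where f=t], rule fe)
  also have "\<dots> = (if a1 = s \<and> a2 = u then t (Bf (s,v,a3) \<beta>) else 0)"
    by (simp add: T_zero_form[OF t])
  finally show ?thesis .
qed

lemma ract_E_Bf:
  assumes t: "t \<in> T" and r: "(s,u,v) \<in> Idx" and b: "(b1,b2,b3) \<in> Idx"
  shows "ract sc (E (s,u,v)) t (Bf \<alpha> (b1,b2,b3)) = (if b1 = s \<and> b3 = v then t (Bf \<alpha> (s,b2,u)) else 0)"
proof -
  have fe: "(\<lambda>x y. Bf \<alpha> (b1,b2,b3) x (y * E (s,u,v))) = (if b1 = s \<and> b3 = v then Bf \<alpha> (s,b2,u) else (\<lambda>x y. 0))"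
  proof (intro ext)
    fix x y
    have "co (y * E (s,u,v)) (b1,b2,b3) = (\<Sum>m<ns!b1. co y (b1,b2,m) * co (E (s,u,v)) (b1,m,b3))"
      using b by (simp add: co_mul)
    also have "\<dots> = (\<Sum>m<ns!b1. if m = u \<and> b1 = s \<and> b3 = v then co y (s,b2,u) else 0)"
      using r by (intro sum.cong refl) (auto simp: co_E)
    also have "\<dots> = (if b1 = s \<and> b3 = v then co y (s,b2,u) else 0)"
      using r by (auto simp: sum.delta' if_distrib cong: if_cong)
    finally show "Bf \<alpha> (b1,b2,b3) x (y * E (s,u,v)) = (if b1 = s \<and> b3 = v then Bf \<alpha> (s,b2,u) else (\<lambda>x y. 0)) x y"
      by (simp add: Bf_def)
  qed
  have "ract sc (E (s,u,v)) t (Bf \<alpha> (b1,b2,b3)) = t (\<lambda>x y. Bf \<alpha> (b1,b2,b3) x (y * E (s,u,v)))"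
    by (simp add: ract_def bilin_Bf)
  also have "\<dots> = t (if b1 = s \<and> b3 = v then Bf \<alpha> (s,b2,u) else (\<lambda>x y. 0))"
    by (rule arg_cong[where f=t], rule fe)
  also have "\<dots> = (if b1 = s \<and> b3 = v then t (Bf \<alpha> (s,b2,u)) else 0)"
    by (simp add: T_zero_form[OF t])
  finally show ?thesis .
qed

definition Dc :: "nat \<times> nat \<times> nat \<Rightarrow> 'a \<Rightarrow> ('a, 'k) tens" where
  "Dc \<gamma> = (case \<gamma> of (i,p,q) \<Rightarrow> Dl i p q)"

definition cf :: "('a \<Rightarrow> ('a, 'k) tens) \<Rightarrow> nat \<times> nat \<times> nat \<Rightarrow> 'k" where
  "cf \<Delta> \<gamma> = (case \<gamma> of (i,p,q) \<Rightarrow> \<Delta> 1 (Bf (i,0,p) (i,q,0)))"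

lemma Dc_FS: "\<gamma> \<in> Idx \<Longrightarrow> Dc \<gamma> \<in> frobenius_space sc"
  by (cases \<gamma>) (simp add: Dc_def D_FS)

lemma Dc_T: "Dc \<gamma> x \<in> T"
  by (cases \<gamma>) (simp add: Dc_def D_T)

lemma FS_span:
  assumes "\<Delta> \<in> frobenius_space sc"
  shows "\<Delta> = (\<Sum>\<gamma>\<in>Idx. mscale (cf \<Delta> \<gamma>) (Dc \<gamma>))"
proof -
  have lin: "Vector_Spaces.linear sc tscale \<Delta>" and inT: "\<And>x. \<Delta> x \<in> T"
    and bim: "\<And>a b. \<Delta> (a * b) = lact sc a (\<Delta> b) \<and> \<Delta> (a * b) = ract sc b (\<Delta> a)"
    using assms unfolding frobenius_space_def nearly_frobenius_coproduct_def by blast+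
  define e where "e = \<Delta> 1"
  have eT: "e \<in> T" using inT e_def by simp
  have L: "\<Delta> (E \<rho>) = lact sc (E \<rho>) e" for \<rho> using bim[of "E \<rho>" 1] e_def by simp
  have R: "\<Delta> (E \<rho>) = ract sc (E \<rho>) e" for \<rho> using bim[of 1 "E \<rho>"] e_def by simp
  have g1: "\<Delta> (E (s,u,v)) (Bf (a1,a2,a3) \<beta>) = (if a1 = s \<and> a2 = u then e (Bf (s,v,a3) \<beta>) else 0)"
    if "(s,u,v) \<in> Idx" "(a1,a2,a3) \<in> Idx" for s u v a1 a2 a3 \<beta>
    using lact_E_Bf[OF eT that] L by simp
  have g2: "\<Delta> (E (s,u,v)) (Bf \<alpha> (b1,b2,b3)) = (if b1 = s \<and> b3 = v then e (Bf \<alpha> (s,b2,u)) else 0)"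
    if "(s,u,v) \<in> Idx" "(b1,b2,b3) \<in> Idx" for s u v b1 b2 b3 \<alpha>
    using ract_E_Bf[OF eT that] R by simp
  have key: "\<Delta> (E (s,u,v)) (Bf (a1,a2,a3) (b1,b2,b3)) =
      (if a1 = s \<and> a2 = u \<and> b1 = s \<and> b3 = v then e (Bf (s,0,a3) (s,b2,0)) else 0)"
    if r: "(s,u,v) \<in> Idx" and a: "(a1,a2,a3) \<in> Idx" and b: "(b1,b2,b3) \<in> Idx" for s u v a1 a2 a3 b1 b2 b3
  proof (cases "a1 = s \<and> a2 = u \<and> b1 = s \<and> b3 = v")
    case True
    have s: "s < length ns" using r by simp
    have i1: "(s,v,0) \<in> Idx" "(s,v,a3) \<in> Idx" "(s,b2,0) \<in> Idx"
      using r a b True nz[OF s] by auto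
    have "\<Delta> (E (s,u,v)) (Bf (a1,a2,a3) (b1,b2,b3)) = e (Bf (s,v,a3) (s,b2,v))"
      using g1[OF r a, of "(b1,b2,b3)"] True by simp
    also have "\<dots> = \<Delta> (E (s,v,0)) (Bf (s,v,a3) (s,b2,0))"
      using g2[OF i1(1) i1(3), of "(s,v,a3)"] by simp
    also have "\<dots> = e (Bf (s,0,a3) (s,b2,0))"
      using g1[OF i1(1) i1(2), of "(s,b2,0)"] by simp
    finally show ?thesis using True by simp
  next
    case False
    then show ?thesis using g1[OF r a, of "(b1,b2,b3)"] g2[OF r b, of "(a1,a2,a3)"] by auto
  qed
  show ?thesis
  proof (rule ext)
    fix x
    have rhs_app: "(\<Sum>\<gamma>\<in>Idx. mscale (cf \<Delta> \<gamma>) (Dc \<gamma>)) x = (\<Sum>\<gamma>\<in>Idx. tscale (cf \<Delta> \<gamma>) (Dc \<gamma> x))"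
      by (simp add: sum_fun_app)
    show "\<Delta> x = (\<Sum>\<gamma>\<in>Idx. mscale (cf \<Delta> \<gamma>) (Dc \<gamma>)) x"
      unfolding rhs_app
    proof (rule T_eqI)
      show "\<Delta> x \<in> T" by (rule inT)
      show "(\<Sum>\<gamma>\<in>Idx. tscale (cf \<Delta> \<gamma>) (Dc \<gamma> x)) \<in> T"
        by (intro T_sum T_scale Dc_T)
      fix \<alpha> \<beta> assume a: "\<alpha> \<in> Idx" and b: "\<beta> \<in> Idx"
      obtain a1 a2 a3 where aa: "\<alpha> = (a1,a2,a3)" by (cases \<alpha>) auto
      obtain b1 b2 b3 where bb: "\<beta> = (b1,b2,b3)" by (cases \<beta>) auto
      interpret l: Vector_Spaces.linear sc tscale \<Delta> by (rule lin)
      have "\<Delta> x = \<Delta> (\<Sum>\<rho>\<in>Idx. sc (co x \<rho>) (E \<rho>))" by (subst expand[of x]) (rule refl)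
      also have "\<dots> = (\<Sum>\<rho>\<in>Idx. tscale (co x \<rho>) (\<Delta> (E \<rho>)))" by (simp add: l.sum l.scale)
      finally have "\<Delta> x (Bf \<alpha> \<beta>) = (\<Sum>\<rho>\<in>Idx. co x \<rho> * \<Delta> (E \<rho>) (Bf \<alpha> \<beta>))"
        by (simp add: sum_fun_app)
      also have "\<dots> = (\<Sum>\<rho>\<in>Idx. if \<rho> = (a1,a2,b3) then
            (if b1 = a1 then co x (a1,a2,b3) * e (Bf (a1,0,a3) (a1,b2,0)) else 0) else 0)"
      proof (rule sum.cong[OF refl])
        fix \<rho> assume r: "\<rho> \<in> Idx"
        obtain s u v where rr: "\<rho> = (s,u,v)" by (cases \<rho>) auto
        show "co x \<rho> * \<Delta> (E \<rho>) (Bf \<alpha> \<beta>) = (if \<rho> = (a1,a2,b3) then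
            (if b1 = a1 then co x (a1,a2,b3) * e (Bf (a1,0,a3) (a1,b2,0)) else 0) else 0)"
          using key[of s u v a1 a2 a3 b1 b2 b3] r a b aa bb rr by auto
      qed
      also have "\<dots> = (if b1 = a1 then co x (a1,a2,b3) * e (Bf (a1,0,a3) (a1,b2,0)) else 0)"
        using a b aa bb by (auto simp: sum.delta')
      also have "\<dots> = (\<Sum>\<gamma>\<in>Idx. if \<gamma> = (a1,a3,b2) then
            (if b1 = a1 then co x (a1,a2,b3) * e (Bf (a1,0,a3) (a1,b2,0)) else 0) else 0)"
        using a b aa bb by (auto simp: sum.delta')
      also have "\<dots> = (\<Sum>\<gamma>\<in>Idx. cf \<Delta> \<gamma> * Dc \<gamma> x (Bf \<alpha> \<beta>))"
      proof (rule sum.cong[OF refl])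
        fix \<gamma> assume g: "\<gamma> \<in> Idx"
        obtain i p q where gg: "\<gamma> = (i,p,q)" by (cases \<gamma>) auto
        show "(if \<gamma> = (a1,a3,b2) then
            (if b1 = a1 then co x (a1,a2,b3) * e (Bf (a1,0,a3) (a1,b2,0)) else 0) else 0) =
            cf \<Delta> \<gamma> * Dc \<gamma> x (Bf \<alpha> \<beta>)"
          using D_Bf[of i p q a1 a2 a3 b1 b2 b3 x] g a b aa bb gg
          by (auto simp: Dc_def cf_def e_def)
      qed
      finally show "\<Delta> x (Bf \<alpha> \<beta>) = (\<Sum>\<gamma>\<in>Idx. tscale (cf \<Delta> \<gamma>) (Dc \<gamma> x)) (Bf \<alpha> \<beta>)"
        by (simp add: sum_fun_app)
    qed
  qed
qed

lemma Lf:
  assumes g: "(i,p,q) \<in> Idx" and g': "(i',p',q') \<in> Idx"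
  shows "Dc (i,p,q) (E (i',0,0)) (Bf (i',0,p') (i',q',0)) = (if (i,p,q) = (i',p',q') then 1 else 0)"
proof -
  have i': "i' < length ns" using g' by simp
  have idx: "(i',0,p') \<in> Idx" "(i',q',0) \<in> Idx" "(i',0,0) \<in> Idx" using g' nz[OF i'] by auto
  show ?thesis
    using D_Bf[OF g idx(1) idx(2), of "E (i',0,0)"] co_E[OF idx(3)]
    by (auto simp: Dc_def)
qed

lemma Dc_inj: "inj_on Dc Idx"
proof (rule inj_onI)
  fix \<gamma> \<gamma>' assume g: "\<gamma> \<in> Idx" and g': "\<gamma>' \<in> Idx" and eq: "Dc \<gamma> = Dc \<gamma>'"
  obtain i p q where gg: "\<gamma> = (i,p,q)" by (cases \<gamma>) auto
  obtain i' p' q' where gg': "\<gamma>' = (i',p',q')" by (cases \<gamma>') auto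
  have "Dc \<gamma> (E (i',0,0)) (Bf (i',0,p') (i',q',0)) = Dc \<gamma>' (E (i',0,0)) (Bf (i',0,p') (i',q',0))"
    using eq by simp
  then show "\<gamma> = \<gamma>'"
    using Lf[of i p q i' p' q'] Lf[of i' p' q' i' p' q'] g g' gg gg'
    by (auto split: if_splits)
qed

lemma Dc_indep: "\<not> module.dependent mscale (Dc ` Idx)"
proof -
  interpret v: vector_space "mscale :: 'k \<Rightarrow> ('a \<Rightarrow> ('a, 'k) tens) \<Rightarrow> _" by (rule vs_mscale)
  show ?thesis
  proof
    assume "v.dependent (Dc ` Idx)"
    then obtain u where nz0: "\<exists>w\<in>Dc ` Idx. u w \<noteq> 0" and s0: "(\<Sum>w\<in>Dc ` Idx. mscale (u w) w) = 0"
      by (auto simp: v.dependent_finite)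
    from nz0 obtain \<gamma>0 where g0: "\<gamma>0 \<in> Idx" and un: "u (Dc \<gamma>0) \<noteq> 0" by auto
    obtain i' p' q' where gg: "\<gamma>0 = (i',p',q')" by (cases \<gamma>0) auto
    have s1: "(\<Sum>\<gamma>\<in>Idx. mscale (u (Dc \<gamma>)) (Dc \<gamma>)) = 0"
      using s0 by (simp add: sum.reindex[OF Dc_inj])
    have "(\<Sum>\<gamma>\<in>Idx. mscale (u (Dc \<gamma>)) (Dc \<gamma>)) (E (i',0,0)) (Bf (i',0,p') (i',q',0)) = 0"
      using s1 by simp
    then have "(\<Sum>\<gamma>\<in>Idx. u (Dc \<gamma>) * Dc \<gamma> (E (i',0,0)) (Bf (i',0,p') (i',q',0))) = 0"
      by (simp add: sum_fun_app)
    moreover have "(\<Sum>\<gamma>\<in>Idx. u (Dc \<gamma>) * Dc \<gamma> (E (i',0,0)) (Bf (i',0,p') (i',q',0)))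
        = (\<Sum>\<gamma>\<in>Idx. if \<gamma> = \<gamma>0 then u (Dc \<gamma>0) else 0)"
    proof (rule sum.cong[OF refl])
      fix \<gamma> assume g: "\<gamma> \<in> Idx"
      obtain i p q where ggg: "\<gamma> = (i,p,q)" by (cases \<gamma>) auto
      show "u (Dc \<gamma>) * Dc \<gamma> (E (i',0,0)) (Bf (i',0,p') (i',q',0)) = (if \<gamma> = \<gamma>0 then u (Dc \<gamma>0) else 0)"
        using Lf[of i p q i' p' q'] g g0 gg ggg by auto
    qed
    ultimately show False using g0 un by simp
  qed
qed

lemma FS_in_span: "frobenius_space sc \<subseteq> module.span mscale (Dc ` Idx)"
proof
  interpret v: vector_space "mscale :: 'k \<Rightarrow> ('a \<Rightarrow> ('a, 'k) tens) \<Rightarrow> _" by (rule vs_mscale)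
  fix \<Delta> assume "\<Delta> \<in> frobenius_space sc"
  then have "\<Delta> = (\<Sum>\<gamma>\<in>Idx. mscale (cf \<Delta> \<gamma>) (Dc \<gamma>))" by (rule FS_span)
  also have "\<dots> \<in> v.span (Dc ` Idx)"
    by (intro v.span_sum v.span_scale v.span_base) auto
  finally show "\<Delta> \<in> v.span (Dc ` Idx)" .
qed

lemma Frobdim_eq: "Frobdim sc = (\<Sum>i<length ns. (ns ! i)^2)"
proof -
  interpret v: vector_space "mscale :: 'k \<Rightarrow> ('a \<Rightarrow> ('a, 'k) tens) \<Rightarrow> _" by (rule vs_mscale)
  have "v.dim (frobenius_space sc) = card (Dc ` Idx)"
    by (rule v.dim_unique[OF _ FS_in_span Dc_indep refl]) (auto intro: Dc_FS)
  also have "\<dots> = card Idx" by (rule card_image[OF Dc_inj])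
  finally show ?thesis by (simp add: Frobdim_def card_Idx)
qed

end

theorem corollary9:
  fixes sc :: "'k::field \<Rightarrow> 'a::{ring,monoid_mult} \<Rightarrow> 'a"
    and ns :: "nat list"
  assumes "alg_closed TYPE('k)"
    and "k_algebra sc"
    and "\<forall>n\<in>set ns. 0 < n"
    and "iso_prod_matrix_algebras sc ns"
  shows "Frobdim sc = (\<Sum>i<length ns. (ns ! i)^2)"
proof -
  obtain \<phi> :: "'a \<Rightarrow> nat \<Rightarrow> nat \<Rightarrow> nat \<Rightarrow> 'k" where
    "bij_betw \<phi> UNIV (pm_carrier ns)"
    "\<forall>x y. \<phi> (x + y) = (\<lambda>i j l. \<phi> x i j l + \<phi> y i j l)"
    "\<forall>c x. \<phi> (sc c x) = (\<lambda>i j l. c * \<phi> x i j l)"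
    "\<forall>x y. \<phi> (x * y) = pm_mul ns (\<phi> x) (\<phi> y)"
    using assms(4) unfolding iso_prod_matrix_algebras_def by blast
  then interpret frob_setup sc ns \<phi>
    using assms(2,3) by unfold_locales auto
  show ?thesis by (rule Frobdim_eq)
qed

end
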